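(* For integers $m,n>2$ and $l>0$, \begin{align*} \zeta_{H_{m,n,l}}(u)^{-1}=&-4u^{2m+2n+2l}+u^{2m+2n}+4u^{2m+n+2l}+4u^{m+2n+2l}-2u^{2m+n}-2u^{m+2n}\\ &-4u^{m+n+2l}+4u^{m+n}+u^{2n}+u^{2m}-2u^{n}-2u^{m}+1. \end{align*}
   Context: For $m,n>2$ and $l>0$, the handcuff graph $H_{m,n,l}$ consists of two vertex-disjoint cycles $C_m$ and $C_n$ together with a path of $l$ edges joining a vertex of $C_m$ to a vertex of $C_n$, internally disjoint from both cycles. For a finite connected graph $G$ with vertex set $V$, edge set $E$ and no vertex of degree $1$, let $r=|E|-|V|+1$, $\mathcal{A}$ the adjacency matrix, $\mathcal{Q}=D-I$ with $D$ the diagonal degree matrix; the reciprocal Ihara zeta function is $\zeta_G(u)^{-1}=(1-u^2)^{r-1}\det(I-\mathcal{A}u+\mathcal{Q}u^2)$. *)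

theory Defs
  imports "Jordan_Normal_Form.Determinant"
begin

text \<open>A finite simple graph on the vertex set {0..<N}, given by a symmetric
irreflexive adjacency predicate adj.\<close>

definition graph_edges :: "nat \<Rightarrow> (nat \<Rightarrow> nat \<Rightarrow> bool) \<Rightarrow> (nat \<times> nat) set" where
  "graph_edges N adj = {(i, j). i < j \<and> j < N \<and> adj i j}"

definition graph_degree :: "nat \<Rightarrow> (nat \<Rightarrow> nat \<Rightarrow> bool) \<Rightarrow> nat \<Rightarrow> nat" where
  "graph_degree N adj i = card {j. j < N \<and> adj i j}"

definition adj_matrix :: "nat \<Rightarrow> (nat \<Rightarrow> nat \<Rightarrow> bool) \<Rightarrow> 'a :: comm_ring_1 mat" where
  "adj_matrix N adj = mat N N (\<lambda>(i, j). if adj i j then 1 else 0)"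

definition Q_matrix :: "nat \<Rightarrow> (nat \<Rightarrow> nat \<Rightarrow> bool) \<Rightarrow> 'a :: comm_ring_1 mat" where
  "Q_matrix N adj = mat N N (\<lambda>(i, j). if i = j then of_nat (graph_degree N adj i) - 1 else 0)"

definition cycle_rank :: "nat \<Rightarrow> (nat \<Rightarrow> nat \<Rightarrow> bool) \<Rightarrow> int" where
  "cycle_rank N adj = int (card (graph_edges N adj)) - int N + 1"

text \<open>For the graphs considered (connected,
  no vertex of degree 1, not a tree) one has r \<ge> 1, so r - 1 is a natural number.\<close>
definition ihara_zeta_inv :: "nat \<Rightarrow> (nat \<Rightarrow> nat \<Rightarrow> bool) \<Rightarrow> 'a :: comm_ring_1 \<Rightarrow> 'a" where
  "ihara_zeta_inv N adj u =
     (1 - u^2) ^ nat (cycle_rank N adj - 1) *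
     det (1\<^sub>m N - u \<cdot>\<^sub>m adj_matrix N adj + (u^2) \<cdot>\<^sub>m Q_matrix N adj)"

text \<open>Handcuff graph H_{m,n,l}: vertices 0..m-1 form C_m, vertices m..m+n-1 form C_n,
  and the path of l edges runs 0 = p_0, p_1, ..., p_l = m, with inner vertices
  p_k = m+n+k-1 (1 \<le> k \<le> l-1).\<close>
definition handcuff_nverts :: "nat \<Rightarrow> nat \<Rightarrow> nat \<Rightarrow> nat" where
  "handcuff_nverts m n l = m + n + l - 1"

definition handcuff_path_vertex :: "nat \<Rightarrow> nat \<Rightarrow> nat \<Rightarrow> nat \<Rightarrow> nat" where
  "handcuff_path_vertex m n l k = (if k = 0 then 0 else if k = l then m else m + n + k - 1)"

definition handcuff_adj :: "nat \<Rightarrow> nat \<Rightarrow> nat \<Rightarrow> nat \<Rightarrow> nat \<Rightarrow> bool" where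
  "handcuff_adj m n l i j =
     ((\<exists>k<m. {i, j} = {k, (k + 1) mod m})
    \<or> (\<exists>k<n. {i, j} = {m + k, m + (k + 1) mod n})
    \<or> (\<exists>k<l. {i, j} = {handcuff_path_vertex m n l k, handcuff_path_vertex m n l (k + 1)}))"

end

theory Submission
  imports Defs
begin


definition mk :: "nat \<Rightarrow> (nat \<Rightarrow> nat \<Rightarrow> 'a) \<Rightarrow> 'a mat" where
  "mk n f = mat n n (\<lambda>(i,j). f i j)"

lemma mk_carrier[simp]: "mk n f \<in> carrier_mat n n" by (simp add: mk_def)
lemma mk_dim[simp]: "dim_row (mk n f) = n" "dim_col (mk n f) = n" by (simp_all add: mk_def)
lemma mk_index[simp]: "i<n \<Longrightarrow> j<n \<Longrightarrow> mk n f $$ (i,j) = f i j" by (simp add: mk_def)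
lemma mk_cong: "(\<And>i j. i<n \<Longrightarrow> j<n \<Longrightarrow> f i j = g i j) \<Longrightarrow> mk n f = mk n g"
  by (rule eq_matI, auto)

lemma mat_delete_mk: "mat_delete (mk (Suc n) f) i j =
   mk n (\<lambda>r s. f (insert_index i r) (insert_index j s))"
  by (rule eq_matI, auto simp: mat_delete_def insert_index_def)

lemma cofactor_mk: "cofactor (mk (Suc n) f) i j =
   (-1)^(i+j) * det (mk n (\<lambda>r s. f (insert_index i r) (insert_index j s)))"
  by (simp add: cofactor_def mat_delete_mk)

lemma det_change_entry:
  fixes A B :: "'a :: comm_ring_1 mat"
  assumes A: "A \<in> carrier_mat n n" and B: "B \<in> carrier_mat n n" and i: "i < n" and j: "j < n"
  and eq: "\<And>r s. r<n \<Longrightarrow> s<n \<Longrightarrow> (r,s) \<noteq> (i,j) \<Longrightarrow> B$$(r,s) = A$$(r,s)"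
  shows "det B = det A + (B$$(i,j) - A$$(i,j)) * cofactor A i j"
proof -
  have cof: "cofactor B i s = cofactor A i s" for s
  proof -
    have "mat_delete B i s = mat_delete A i s"
      using A B i by (intro eq_matI, auto simp: mat_delete_def intro!: eq)
    thus ?thesis by (simp add: cofactor_def)
  qed
  have "det B = (\<Sum>s<n. B $$ (i,s) * cofactor A i s)"
    using laplace_expansion_row[OF B i] by (simp add: cof)
  also have "\<dots> = (\<Sum>s<n. A $$ (i,s) * cofactor A i s + (if s = j then (B$$(i,j) - A$$(i,j)) * cofactor A i j else 0))"
    by (rule sum.cong, auto simp: eq i algebra_simps)
  also have "\<dots> = det A + (B$$(i,j) - A$$(i,j)) * cofactor A i j"
    using laplace_expansion_row[OF A i] j by (simp add: sum.distrib)
  finally show ?thesis .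
qed

lemma det_mk_change:
  fixes f g :: "nat \<Rightarrow> nat \<Rightarrow> 'a :: comm_ring_1"
  assumes "i<n" "j<n" "\<And>r s. r<n \<Longrightarrow> s<n \<Longrightarrow> (r,s) \<noteq> (i,j) \<Longrightarrow> g r s = f r s"
  shows "det (mk n g) = det (mk n f) + (g i j - f i j) * cofactor (mk n f) i j"
  using det_change_entry[of "mk n f" n "mk n g" i j] assms by simp

lemma det_mk_zero_row:
  fixes f :: "nat \<Rightarrow> nat \<Rightarrow> 'a :: comm_ring_1"
  assumes "i<n" "\<And>j. j<n \<Longrightarrow> f i j = 0"
  shows "det (mk n f) = 0"
  using laplace_expansion_row[OF mk_carrier[of n f] assms(1)] assms by simp

lemma det_mk_lower:
  fixes f :: "nat \<Rightarrow> nat \<Rightarrow> 'a :: comm_ring_1"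
  assumes "\<And>i j. i<j \<Longrightarrow> j<n \<Longrightarrow> f i j = 0"
  shows "det (mk n f) = (\<Prod>i<n. f i i)"
  by (subst det_lower_triangular[of n], insert assms, auto simp: prod_list_diag_prod atLeast0LessThan)

lemma det_mk_upper:
  fixes f :: "nat \<Rightarrow> nat \<Rightarrow> 'a :: comm_ring_1"
  assumes "\<And>i j. j<i \<Longrightarrow> i<n \<Longrightarrow> f i j = 0"
  shows "det (mk n f) = (\<Prod>i<n. f i i)"
  by (subst det_upper_triangular[of _ n], insert assms, auto simp: upper_triangular_def prod_list_diag_prod atLeast0LessThan)

lemma det_mk_step:
  fixes f :: "nat \<Rightarrow> nat \<Rightarrow> 'a :: comm_ring_1"
  assumes z1: "\<And>j. j < k \<Longrightarrow> f (Suc k) j = 0" and z2: "\<And>j. j < k \<Longrightarrow> f j (Suc k) = 0"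
  shows "det (mk (Suc (Suc k)) f) = f (Suc k) (Suc k) * det (mk (Suc k) f)
     - f k (Suc k) * f (Suc k) k * det (mk k f)"
proof -
  let ?A = "mk (Suc (Suc k)) f"
  have "det ?A = (\<Sum>i<Suc (Suc k). ?A $$ (i, Suc k) * cofactor ?A i (Suc k))"
    by (rule laplace_expansion_column, auto)
  also have "\<dots> = (\<Sum>i\<in>{k, Suc k}. ?A $$ (i, Suc k) * cofactor ?A i (Suc k))"
    by (rule sum.mono_neutral_right, auto simp: z2)
  also have "\<dots> = f k (Suc k) * cofactor ?A k (Suc k) + f (Suc k) (Suc k) * cofactor ?A (Suc k) (Suc k)"
    by simp
  also have "cofactor ?A (Suc k) (Suc k) = det (mk (Suc k) f)"
    unfolding cofactor_mk by (simp add: insert_index_def, rule arg_cong[of _ _ det], rule mk_cong, auto)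
  also have "cofactor ?A k (Suc k) = - det (mk (Suc k) (\<lambda>r s. f (insert_index k r) (insert_index (Suc k) s)))"
    unfolding cofactor_mk by simp
  also have "det (mk (Suc k) (\<lambda>r s. f (insert_index k r) (insert_index (Suc k) s))) = f (Suc k) k * det (mk k f)"
  proof -
    let ?D = "mk (Suc k) (\<lambda>r s. f (insert_index k r) (insert_index (Suc k) s))"
    have "det ?D = (\<Sum>s<Suc k. ?D $$ (k, s) * cofactor ?D k s)"
      by (rule laplace_expansion_row, auto)
    also have "\<dots> = (\<Sum>s\<in>{k}. ?D $$ (k, s) * cofactor ?D k s)"
      by (rule sum.mono_neutral_right, auto simp: insert_index_def z1)
    also have "\<dots> = f (Suc k) k * cofactor ?D k k" by (simp add: insert_index_def)
    also have "cofactor ?D k k = det (mk k f)"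
      unfolding cofactor_mk by (simp, rule arg_cong[of _ _ det], rule mk_cong, auto simp: insert_index_def)
    finally show ?thesis .
  qed
  finally show ?thesis by (simp add: algebra_simps)
qed


lemma det_mk_block_UR:
  fixes f :: "nat \<Rightarrow> nat \<Rightarrow> 'a :: idom"
  assumes z: "\<And>i j. i < a \<Longrightarrow> a \<le> j \<Longrightarrow> j < a + b \<Longrightarrow> f i j = 0"
  shows "det (mk (a+b) f) = det (mk a f) * det (mk b (\<lambda>i j. f (a+i) (a+j)))"
proof -
  have "mk (a+b) f = four_block_mat (mk a f) (0\<^sub>m a b) (mat b a (\<lambda>(i,j). f (a+i) j)) (mk b (\<lambda>i j. f (a+i) (a+j)))"
    by (rule eq_matI, auto simp: z)
  moreover have "det \<dots> = det (mk a f) * det (mk b (\<lambda>i j. f (a+i) (a+j)))"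
    by (rule det_four_block_mat_upper_right_zero, auto)
  ultimately show ?thesis by simp
qed

lemma det_mk_block_LL:
  fixes f :: "nat \<Rightarrow> nat \<Rightarrow> 'a :: idom"
  assumes z: "\<And>i j. a \<le> i \<Longrightarrow> i < a + b \<Longrightarrow> j < a \<Longrightarrow> f i j = 0"
  shows "det (mk (a+b) f) = det (mk a f) * det (mk b (\<lambda>i j. f (a+i) (a+j)))"
proof -
  have "mk (a+b) f = four_block_mat (mk a f) (mat a b (\<lambda>(i,j). f i (a+j))) (0\<^sub>m b a) (mk b (\<lambda>i j. f (a+i) (a+j)))"
    by (rule eq_matI, auto simp: z)
  moreover have "det \<dots> = det (mk a f) * det (mk b (\<lambda>i j. f (a+i) (a+j)))"
    by (rule det_four_block_mat_lower_left_zero, auto)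
  ultimately show ?thesis by simp
qed

lemma det_mk_bridge:
  fixes f :: "nat \<Rightarrow> nat \<Rightarrow> 'a :: idom"
  assumes ur: "\<And>i j. i < Suc a \<Longrightarrow> Suc a \<le> j \<Longrightarrow> j < Suc a + Suc b \<Longrightarrow> (i,j) \<noteq> (a, Suc a) \<Longrightarrow> f i j = 0"
  and ll: "\<And>i j. i < Suc a \<Longrightarrow> Suc a \<le> j \<Longrightarrow> j < Suc a + Suc b \<Longrightarrow> (i,j) \<noteq> (a, Suc a) \<Longrightarrow> f j i = 0"
  shows "det (mk (Suc a + Suc b) f) = det (mk (Suc a) f) * det (mk (Suc b) (\<lambda>i j. f (Suc a+i) (Suc a+j)))
     - f a (Suc a) * f (Suc a) a * det (mk a f) * det (mk b (\<lambda>i j. f (Suc (Suc a)+i) (Suc (Suc a)+j)))"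
proof -
  define N where "N = Suc a + Suc b"
  define g where "g = (\<lambda>i j. if i = a \<and> j = Suc a then 0 else f i j)"
  have 1: "det (mk N f) = det (mk N g) + (f a (Suc a) - g a (Suc a)) * cofactor (mk N g) a (Suc a)"
    by (rule det_mk_change, auto simp: N_def g_def)
  have 2: "det (mk N g) = det (mk (Suc a) f) * det (mk (Suc b) (\<lambda>i j. f (Suc a+i) (Suc a+j)))"
    unfolding N_def
    by (subst det_mk_block_UR, auto simp: g_def ur intro!: arg_cong2[of _ _ _ _ "(*)"] arg_cong[of _ _ det] mk_cong)
  define h where "h = (\<lambda>r s. g (insert_index a r) (insert_index (Suc a) s))"
  have 3: "cofactor (mk N g) a (Suc a) = - det (mk (Suc a + b) h)"
    unfolding N_def h_def by (simp add: cofactor_mk)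
  define h' where "h' = (\<lambda>r s. if r = a \<and> s = a then 0 else h r s)"
  have 4: "det (mk (Suc a + b) h) = det (mk (Suc a + b) h') + (h a a - h' a a) * cofactor (mk (Suc a + b) h') a a"
    by (rule det_mk_change, auto simp: h'_def)
  have 5: "det (mk (Suc a + b) h') = 0"
    apply (subst det_mk_block_LL)
     apply (force simp: h'_def h_def g_def insert_index_def intro!: ll)
    apply (subst det_mk_zero_row[of a])
      apply (auto simp: h'_def h_def g_def insert_index_def intro!: ll)
    done
  have 6: "cofactor (mk (Suc a + b) h') a a = det (mk a f) * det (mk b (\<lambda>i j. f (Suc (Suc a)+i) (Suc (Suc a)+j)))"
    apply (simp only: add_Suc cofactor_mk)
    apply simp
    apply (subst det_mk_block_UR)
     apply (force simp: h'_def h_def g_def insert_index_def intro!: ur)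
    apply (intro arg_cong2[of _ _ _ _ "(*)"] arg_cong[of _ _ det] mk_cong)
     apply (auto simp: h'_def h_def g_def insert_index_def)
    done
  have 7: "h a a = f (Suc a) a" "h' a a = 0" "g a (Suc a) = 0"
    by (auto simp: h'_def h_def g_def insert_index_def)
  show ?thesis unfolding N_def[symmetric] 1 2 3 4 5 6 7 by (simp add: algebra_simps)
qed


definition pathf :: "'a::comm_ring_1 \<Rightarrow> nat \<Rightarrow> nat \<Rightarrow> 'a" where
  "pathf u i j = (if i = j then 1 + u^2 else if i = Suc j \<or> j = Suc i then -u else 0)"

fun cc :: "'a::comm_ring_1 \<Rightarrow> nat \<Rightarrow> 'a" where
  "cc u 0 = 1"
| "cc u (Suc 0) = 1 + u^2"
| "cc u (Suc (Suc k)) = (1+u^2) * cc u (Suc k) - u^2 * cc u k"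

lemma cc_closed: "(1 - u^2) * cc u k = 1 - u^(2*k+2)"
proof (induction u k rule: cc.induct)
  case (3 u k)
  have "(1-u^2)*cc u (Suc(Suc k)) = (1+u^2)*((1-u^2)*cc u (Suc k)) - u^2*((1-u^2)*cc u k)"
    by (simp add: algebra_simps)
  also have "\<dots> = (1+u^2)*(1 - u^(2*Suc k+2)) - u^2*(1 - u^(2*k+2))" using 3 by simp
  also have "\<dots> = 1 - u^(2*Suc (Suc k)+2)" by (simp add: algebra_simps power2_eq_square power_add)
  finally show ?case .
qed (auto simp: algebra_simps power2_eq_square)

lemma det_path: "det (mk k (pathf u)) = cc u k"
proof (induction u k rule: cc.induct)
  case (1 u) show ?case by (simp add: mk_def)
next
  case (2 u) show ?case by (subst det_single, auto simp: pathf_def)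
next
  case (3 u k)
  show ?case
    by (subst det_mk_step, auto simp: pathf_def 3[simplified] power2_eq_square algebra_simps)
qed

definition cycf :: "'a::comm_ring_1 \<Rightarrow> nat \<Rightarrow> nat \<Rightarrow> nat \<Rightarrow> 'a" where
  "cycf u k i j = (if i = j then 1 + u^2 else if i = Suc j \<or> j = Suc i \<or> (i = 0 \<and> j = k-1) \<or> (i = k-1 \<and> j = 0) then -u else 0)"

lemma neg1_sq: "((-1::'a::comm_ring_1)^q) * (-1)^q = 1"
  by (metis power_mult_distrib mult_minus1 power_one minus_minus)

lemma cyc_alg:
  fixes u C D x w :: "'a::comm_ring_1"
  assumes "x*x = 1"
  shows "C + (-u)*(x*(x*w)) + (-u)*(x*(x*w + (-u)*((-x)*D))) = C - 2*(u*w) - u^2*D"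
proof -
  have "C + (-u)*(x*(x*w)) + (-u)*(x*(x*w + (-u)*((-x)*D))) = C - (x*x)*2*(u*w) - (x*x)*u^2*D"
    by (simp add: algebra_simps power2_eq_square)
  thus ?thesis using assms by simp
qed

lemma det_cycle:
  fixes u :: "'a :: comm_ring_1"
  assumes k: "k = Suc (Suc (Suc q))"
  shows "det (mk k (cycf u k)) = cc u k - 2*u^k - u^2 * cc u (Suc q)"
proof -
  define f1 where "f1 = (\<lambda>i j. if i = k-1 \<and> j = 0 then -u else pathf u i j)"
  have a1: "det (mk k f1) = det (mk k (pathf u)) + (f1 (k-1) 0 - pathf u (k-1) 0) * cofactor (mk k (pathf u)) (k-1) 0"
    by (rule det_mk_change, auto simp: f1_def k)
  have a2: "cofactor (mk k (pathf u)) (k-1) 0 = (-1)^(q+2) * (-u)^(q+2)"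
  proof -
    have "cofactor (mk k (pathf u)) (k-1) 0 = (-1)^(q+2) * det (mk (q+2) (\<lambda>r s. pathf u (insert_index (q+2) r) (insert_index 0 s)))"
      unfolding k by (simp add: cofactor_mk)
    also have "det (mk (q+2) (\<lambda>r s. pathf u (insert_index (q+2) r) (insert_index 0 s))) = (\<Prod>i<q+2. -u)"
      by (subst det_mk_lower, auto simp: pathf_def insert_index_def)
    finally show ?thesis by simp
  qed
  have b1: "det (mk k (cycf u k)) = det (mk k f1) + (cycf u k 0 (k-1) - f1 0 (k-1)) * cofactor (mk k f1) 0 (k-1)"
    by (rule det_mk_change, auto simp: f1_def k pathf_def cycf_def)
  define U' where "U' = (\<lambda>r s. f1 (insert_index 0 r) (insert_index (q+2) s))"
  have b2: "cofactor (mk k f1) 0 (k-1) = (-1)^(q+2) * det (mk (Suc (Suc q)) U')"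
    unfolding k U'_def by (simp add: cofactor_mk)
  define U where "U = (\<lambda>r s. if r = Suc q \<and> s = 0 then 0 else U' r s)"
  have c1: "det (mk (Suc (Suc q)) U') = det (mk (Suc (Suc q)) U) + (U' (Suc q) 0 - U (Suc q) 0) * cofactor (mk (Suc (Suc q)) U) (Suc q) 0"
    by (rule det_mk_change, auto simp: U_def)
  have "det (mk (Suc (Suc q)) U) = (\<Prod>i<Suc (Suc q). -u)"
    by (subst det_mk_upper, auto simp: U_def U'_def f1_def k pathf_def insert_index_def intro!: prod.cong)
  hence c2: "det (mk (Suc (Suc q)) U) = (-u)^(q+2)" by simp
  have "mk (Suc q) (\<lambda>r s. U (insert_index (Suc q) r) (insert_index 0 s)) = mk (Suc q) (pathf u)"
    by (rule mk_cong, auto simp: U_def U'_def f1_def k pathf_def insert_index_def)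
  hence c3: "cofactor (mk (Suc (Suc q)) U) (Suc q) 0 = (-1)^(Suc q) * cc u (Suc q)"
    unfolding cofactor_mk by (simp add: det_path)
  have v: "U' (Suc q) 0 = -u" "U (Suc q) 0 = 0" "f1 (k-1) 0 = -u" "pathf u (k-1) 0 = 0"
    "cycf u k 0 (k-1) = -u" "f1 0 (k-1) = 0"
    by (auto simp: U_def U'_def f1_def k pathf_def cycf_def insert_index_def)
  have "det (mk k (cycf u k)) = cc u k + (-u) * ((-1)^(q+2) * (-u)^(q+2))
      + (-u) * ((-1)^(q+2) * ((-u)^(q+2) + (-u) * ((-1)^(Suc q) * cc u (Suc q))))"
    unfolding b1 a1 a2 b2 c1 c2 c3 v det_path by (simp only: diff_zero)
  also have "\<dots> = cc u k - 2*(u*u^(q+2)) - u^2 * cc u (Suc q)"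
  proof -
    have e1: "(-1::'a)^(q+2) = (-1)^q" by simp
    have e: "(-1::'a)^(q+2) = (-1)^q" "(-1::'a)^(Suc q) = -((-1::'a)^q)" "(-u)^(q+2) = (-1)^q * u^(q+2)"
      by (simp, simp, simp only: power_minus[of u "q+2"] e1)
    show ?thesis unfolding e by (rule cyc_alg, rule neg1_sq)
  qed
  finally have r: "det (mk k (cycf u k)) = cc u k - 2*(u*u^(q+2)) - u^2 * cc u (Suc q)" .
  have "u*u^(q+2) = u^k" using k by simp
  show ?thesis unfolding r by (simp only: \<open>u*u^(q+2) = u^k\<close>)
qed


lemma det_cycle_last:
  fixes u :: "'a :: comm_ring_1"
  assumes k: "k = Suc (Suc (Suc q))"
  shows "det (mk k (\<lambda>i j. if i = j \<and> i = k-1 then 1 + 2*u^2 else cycf u k i j)) = cc u k - 2*u^k - u^2 * cc u (Suc q) + u^2 * cc u (k-1)"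
proof -
  define G where "G = (\<lambda>i j. if i = j \<and> i = k-1 then 1 + 2*u^2 else cycf u k i j)"
  have "det (mk k G) = det (mk k (cycf u k)) + (G (k-1) (k-1) - cycf u k (k-1) (k-1)) * cofactor (mk k (cycf u k)) (k-1) (k-1)"
    by (rule det_mk_change, auto simp: k G_def)
  moreover have "mk (Suc (Suc q)) (\<lambda>r s. cycf u k (insert_index (k-1) r) (insert_index (k-1) s)) = mk (Suc (Suc q)) (pathf u)"
    by (rule mk_cong, auto simp: k cycf_def pathf_def insert_index_def)
  hence "cofactor (mk k (cycf u k)) (k-1) (k-1) = cc u (k-1)"
    unfolding k cofactor_mk by (simp add: det_path)
  ultimately show ?thesis using det_cycle[OF k] by (simp add: cycf_def G_def algebra_simps)
qed

lemma det_cycle_first: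
  fixes u :: "'a :: comm_ring_1"
  assumes k: "k = Suc (Suc (Suc q))"
  shows "det (mk k (\<lambda>i j. if i = j \<and> i = 0 then 1 + 2*u^2 else cycf u k i j)) = cc u k - 2*u^k - u^2 * cc u (Suc q) + u^2 * cc u (k-1)"
proof -
  define G where "G = (\<lambda>i j. if i = j \<and> i = 0 then 1 + 2*u^2 else cycf u k i j)"
  have "det (mk k G) = det (mk k (cycf u k)) + (G 0 0 - cycf u k 0 0) * cofactor (mk k (cycf u k)) 0 0"
    by (rule det_mk_change, auto simp: k G_def)
  moreover have "mk (Suc (Suc q)) (\<lambda>r s. cycf u k (insert_index 0 r) (insert_index 0 s)) = mk (Suc (Suc q)) (pathf u)"
    by (rule mk_cong, auto simp: k cycf_def pathf_def insert_index_def)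
  hence "cofactor (mk k (cycf u k)) 0 0 = cc u (k-1)"
    unfolding k cofactor_mk by (simp add: det_path)
  ultimately show ?thesis using det_cycle[OF k] by (simp add: cycf_def G_def algebra_simps)
qed


definition nadj :: "nat \<Rightarrow> nat \<Rightarrow> nat \<Rightarrow> nat \<Rightarrow> nat \<Rightarrow> bool" where
  "nadj m n l i j = (i = Suc j \<or> j = Suc i \<or> (i = 0 \<and> j = m-1) \<or> (i = m-1 \<and> j = 0)
     \<or> (i = m+l-1 \<and> j = m+n+l-2) \<or> (i = m+n+l-2 \<and> j = m+l-1))"

definition fK :: "nat \<Rightarrow> nat \<Rightarrow> nat \<Rightarrow> 'a::comm_ring_1 \<Rightarrow> nat \<Rightarrow> nat \<Rightarrow> 'a" where
  "fK m n l u i j = (if i = j then (if i = m-1 \<or> i = m+l-1 then 1 + 2*u^2 else 1 + u^2)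
     else if nadj m n l i j then -u else 0)"

lemma lolli_D0:
  assumes "m \<ge> 3" "n \<ge> 3" "l \<ge> 1"
  shows "det (mk (m-1) (fK m n l u)) = cc u (m-1)"
proof -
  have "mk (m-1) (fK m n l u) = mk (m-1) (pathf u)"
    by (rule mk_cong, insert assms, auto simp: fK_def nadj_def pathf_def)
  thus ?thesis by (simp add: det_path)
qed

lemma lolli_D1:
  assumes "m \<ge> 3" "n \<ge> 3" "l \<ge> 1"
  shows "det (mk m (fK m n l u)) = cc u m - 2*u^m - u^2 * cc u (m-2) + u^2 * cc u (m-1)"
proof -
  obtain q where q: "m = Suc (Suc (Suc q))" using assms(1) by (intro that[of "m-3"], simp)
  have "mk m (fK m n l u) = mk m (\<lambda>i j. if i = j \<and> i = m-1 then 1 + 2*u^2 else cycf u m i j)"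
    by (rule mk_cong, insert assms, auto simp: fK_def nadj_def cycf_def)
  hence "det (mk m (fK m n l u)) = cc u m - 2*u^m - u^2 * cc u (Suc q) + u^2 * cc u (m-1)"
    using det_cycle_last[OF q] by simp
  moreover have "Suc q = m - 2" using q by simp
  ultimately show ?thesis by simp
qed

lemma lolli_step:
  assumes "m \<ge> 3" "n \<ge> 3" "j + 2 \<le> l"
  shows "det (mk (m+j+1) (fK m n l u)) = (1+u^2) * det (mk (m+j) (fK m n l u)) - u^2 * det (mk (m+j-1) (fK m n l u))"
proof -
  define k where "k = m+j-1"
  have e: "Suc (Suc k) = m+j+1" "Suc k = m+j" using assms by (auto simp: k_def)
  have "det (mk (Suc (Suc k)) (fK m n l u)) = fK m n l u (Suc k) (Suc k) * det (mk (Suc k) (fK m n l u))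
     - fK m n l u k (Suc k) * fK m n l u (Suc k) k * det (mk k (fK m n l u))"
    by (rule det_mk_step, insert assms, auto simp: fK_def nadj_def k_def)
  moreover have "fK m n l u (Suc k) (Suc k) = 1 + u^2" "fK m n l u k (Suc k) = -u" "fK m n l u (Suc k) k = -u"
    using assms by (auto simp: fK_def nadj_def k_def)
  ultimately have "det (mk (m+j+1) (fK m n l u)) = (1+u^2) * det (mk (m+j) (fK m n l u)) - u^2 * det (mk k (fK m n l u))"
    unfolding e by (simp add: power2_eq_square)
  thus ?thesis unfolding k_def .
qed

lemma pow_split: "k = a + b \<Longrightarrow> (u::'a::comm_ring_1)^k = u^a * u^b"
  by (simp add: power_add)

lemma lolli_closed:
  fixes u :: "'a::comm_ring_1"
  assumes m: "m \<ge> 3" and n: "n \<ge> 3" and l1: "l \<ge> 1" and l: "j \<le> l"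
  shows "(1-u^2) * det (mk (m-1+j) (fK m n l u)) = (1-u^m)^2 + 2*u^(m+2*j)*(1-u^m)"
  using l
proof (induction j rule: less_induct)
  case (less j)
  show ?case
  proof (cases "j \<le> 1")
    case True
    then consider "j = 0" | "j = 1" by linarith
    thus ?thesis
    proof cases
      case 1
      have "(1-u^2) * cc u (m-1) = 1 - u^(2*(m-1)+2)" by (rule cc_closed)
      also have "u^(2*(m-1)+2) = u^m * u^m" by (rule pow_split, insert m, simp)
      finally have c: "(1-u^2) * cc u (m-1) = 1 - u^m * u^m" .
      have e: "m - 1 + j = m - 1" "u^(m+2*j) = u^m" using 1 by simp_all
      show ?thesis unfolding e lolli_D0[OF m n l1] c by (simp add: algebra_simps power2_eq_square)
    next
      case 2
      have e: "m - 1 + j = m" using 2 m by simp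
      define W where "W = u^(m-2)"
      have c1: "(1-u^2) * cc u (m-1) = 1 - W*W*u*u*u*u"
      proof -
        have "u^(2*(m-1)+2) = u^((m-2)+(m-2)+1+1+1+1)" by (rule arg_cong[where f="\<lambda>x. u^x"], insert m, simp)
        also have "\<dots> = W*W*u*u*u*u" by (simp only: power_add power_one_right W_def)
        finally show ?thesis unfolding cc_closed by simp
      qed
      have c2: "(1-u^2) * cc u m = 1 - W*W*u*u*u*u*u*u"
      proof -
        have "u^(2*m+2) = u^((m-2)+(m-2)+1+1+1+1+1+1)" by (rule arg_cong[where f="\<lambda>x. u^x"], insert m, simp)
        also have "\<dots> = W*W*u*u*u*u*u*u" by (simp only: power_add power_one_right W_def)
        finally show ?thesis unfolding cc_closed by simp
      qed
      have c3: "(1-u^2) * cc u (m-2) = 1 - W*W*u*u"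
      proof -
        have "u^(2*(m-2)+2) = u^((m-2)+(m-2)+1+1)" by (rule arg_cong[where f="\<lambda>x. u^x"], insert m, simp)
        also have "\<dots> = W*W*u*u" by (simp only: power_add power_one_right W_def)
        finally show ?thesis unfolding cc_closed by simp
      qed
      have p1: "u^m = W*u*u"
      proof -
        have "u^m = u^((m-2)+1+1)" by (rule arg_cong[where f="\<lambda>x. u^x"], insert m, simp)
        also have "\<dots> = W*u*u" by (simp only: power_add power_one_right W_def)
        finally show ?thesis .
      qed
      have p2: "u^(m+2*j) = W*u*u*u*u"
      proof -
        have "u^(m+2*j) = u^((m-2)+1+1+1+1)" by (rule arg_cong[where f="\<lambda>x. u^x"], insert m 2, simp)
        also have "\<dots> = W*u*u*u*u" by (simp only: power_add power_one_right W_def)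
        finally show ?thesis .
      qed
      note p = p1 p2
      have "(1-u^2) * det (mk (m-1+j) (fK m n l u)) =
         (1-u^2)*cc u m - 2*u^m*(1-u^2) - u^2 * ((1-u^2)*cc u (m-2)) + u^2 * ((1-u^2)*cc u (m-1))"
        unfolding e lolli_D1[OF m n l1] by (simp add: algebra_simps)
      also have "\<dots> = (1-u^m)^2 + 2*u^(m+2*j)*(1-u^m)"
        unfolding c1 c2 c3 p by (simp add: algebra_simps power2_eq_square)
      finally show ?thesis .
    qed
  next
    case False
    obtain i where j: "j = i + 2" using False by (intro that[of "j-2"], simp)
    have IH1: "(1-u^2) * det (mk (m-1+(i+1)) (fK m n l u)) = (1-u^m)^2 + 2*u^(m+2*(i+1))*(1-u^m)"
      using less.IH[of "i+1"] less.prems j by simp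
    have IH0: "(1-u^2) * det (mk (m-1+i) (fK m n l u)) = (1-u^m)^2 + 2*u^(m+2*i)*(1-u^m)"
      using less.IH[of "i"] less.prems j by simp
    have st: "det (mk (m+i+1) (fK m n l u)) = (1+u^2) * det (mk (m+i) (fK m n l u)) - u^2 * det (mk (m+i-1) (fK m n l u))"
      by (rule lolli_step[OF m n], insert less.prems j, simp)
    have e: "m-1+j = m+i+1" "m-1+(i+1) = m+i" "m-1+i = m+i-1" using m j by auto
    have p1: "u^(m+2*(i+1)) = u^(m+2*i)*u*u"
    proof -
      have "u^(m+2*(i+1)) = u^((m+2*i)+1+1)" by (rule arg_cong[where f="\<lambda>x. u^x"], simp)
      also have "\<dots> = u^(m+2*i)*u*u" by (simp only: power_add power_one_right)
      finally show ?thesis .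
    qed
    have p2: "u^(m+2*j) = u^(m+2*i)*u*u*u*u"
    proof -
      have "u^(m+2*j) = u^((m+2*i)+1+1+1+1)" by (rule arg_cong[where f="\<lambda>x. u^x"], simp add: j)
      also have "\<dots> = u^(m+2*i)*u*u*u*u" by (simp only: power_add power_one_right)
      finally show ?thesis .
    qed
    note p = p1 p2
    have "(1-u^2) * det (mk (m-1+j) (fK m n l u)) = (1+u^2) * ((1-u^2) * det (mk (m-1+(i+1)) (fK m n l u)))
       - u^2 * ((1-u^2) * det (mk (m-1+i) (fK m n l u)))"
      unfolding e st by (simp add: algebra_simps)
    also have "\<dots> = (1-u^m)^2 + 2*u^(m+2*j)*(1-u^m)"
      unfolding IH1 IH0 p by (simp add: algebra_simps power2_eq_square)
    finally show ?thesis .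
  qed
qed


lemma fin_alg:
  fixes u A B L DL DL1 Z2 C :: "'a::idom"
  assumes h: "1-u^2 \<noteq> 0"
  and dl: "(1-u^2)*DL = (1-A)^2 + 2*(A*L*L*u*u)*(1-A)"
  and dl1: "(1-u^2)*DL1 = (1-A)^2 + 2*(A*L*L)*(1-A)"
  and z: "(1-u^2)*Z2 = (1-u^2)*(1-B)^2 + u^2*(1-B*B)"
  and c: "(1-u^2)*C = 1 - B*B"
  shows "(1-u^2)*(DL*Z2 - (-u)*(-u)*DL1*C) = -4*(A*A*B*B*L*L*u*u) + A*A*B*B + 4*(A*A*B*L*L*u*u) + 4*(A*B*B*L*L*u*u)
     - 2*(A*A*B) - 2*(A*B*B) - 4*(A*B*L*L*u*u) + 4*(A*B) + B*B + A*A - 2*B - 2*A + 1"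
    (is "_ = ?R")
proof -
  have "(1-u^2)*((1-u^2)*(DL*Z2 - (-u)*(-u)*DL1*C)) = ((1-u^2)*DL)*((1-u^2)*Z2) - u^2*((1-u^2)*DL1)*((1-u^2)*C)"
    by (simp add: algebra_simps power2_eq_square)
  also have "\<dots> = (1-u^2)*?R"
    unfolding dl dl1 z c by (simp add: algebra_simps power2_eq_square)
  finally show ?thesis using h by simp
qed


lemma pow_eq_prod: "a = b \<Longrightarrow> (u::'a::comm_ring_1)^a = u^b" by simp

lemma nadj_shift2:
  assumes m: "m \<ge> 3" and n: "n \<ge> 3" and l: "l \<ge> 1" and i: "i < n" and j: "j < n"
  shows "nadj m n l (m+l-1+i) (m+l-1+j) = (i = Suc j \<or> j = Suc i \<or> (i = 0 \<and> j = n-1) \<or> (i = n-1 \<and> j = 0))"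
proof -
  have "(m+l-1+i = 0) = False" "(m+l-1+i = m-1) = False" "(m+l-1+j = 0) = False" "(m+l-1+j = m-1) = False"
    "(m+l-1+i = m+l-1) = (i = 0)" "(m+l-1+j = m+l-1) = (j = 0)"
    "(m+l-1+i = m+n+l-2) = (i = n-1)" "(m+l-1+j = m+n+l-2) = (j = n-1)"
    "(m+l-1+i = Suc (m+l-1+j)) = (i = Suc j)" "(m+l-1+j = Suc (m+l-1+i)) = (j = Suc i)"
    using assms by auto
  thus ?thesis unfolding nadj_def by simp
qed

lemma block2:
  fixes u :: "'a::comm_ring_1"
  assumes m: "m \<ge> 3" and n: "n \<ge> 3" and l: "l \<ge> 1"
  shows "(1-u^2) * det (mk n (\<lambda>i j. fK m n l u (m+l-1+i) (m+l-1+j))) = (1-u^2)*(1-u^n)^2 + u^2*(1-u^n*u^n)"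
proof -
  obtain q where q: "n = Suc (Suc (Suc q))" using n by (intro that[of "n-3"], simp)
  have "mk n (\<lambda>i j. fK m n l u (m+l-1+i) (m+l-1+j)) = mk n (\<lambda>i j. if i = j \<and> i = 0 then 1 + 2*u^2 else cycf u n i j)"
  proof (rule mk_cong)
    fix i j assume i: "i < n" and j: "j < n"
    have d: "(m+l-1+i = m-1) = False" "(m+l-1+i = m+l-1) = (i = 0)" "(m+l-1+i = m+l-1+j) = (i = j)" using assms by auto
    show "fK m n l u (m+l-1+i) (m+l-1+j) = (if i = j \<and> i = 0 then 1 + 2*u^2 else cycf u n i j)"
      unfolding fK_def nadj_shift2[OF m n l i j] d cycf_def by auto
  qed
  hence d: "det (mk n (\<lambda>i j. fK m n l u (m+l-1+i) (m+l-1+j))) = cc u n - 2*u^n - u^2 * cc u (Suc q) + u^2 * cc u (n-1)"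
    using det_cycle_first[OF q] by simp
  have c1: "(1-u^2) * cc u n = 1 - u^n*u^n*u*u"
  proof -
    have "u^(2*n+2) = u^(n+n+1+1)" by (rule arg_cong[where f="\<lambda>x. u^x"], simp)
    also have "\<dots> = u^n*u^n*u*u" by (simp only: power_add power_one_right)
    finally show ?thesis unfolding cc_closed by simp
  qed
  have c2: "(1-u^2) * cc u (n-1) = 1 - u^n*u^n"
  proof -
    have "u^(2*(n-1)+2) = u^(n+n)" by (rule arg_cong[where f="\<lambda>x. u^x"], insert n, simp)
    also have "\<dots> = u^n*u^n" by (simp only: power_add power_one_right)
    finally show ?thesis unfolding cc_closed by simp
  qed
  have c3: "u*u*((1-u^2) * cc u (Suc q)) = u*u - u^n*u^n"
  proof -
    have "u^n*u^n = u^(2*Suc q+2+1+1)" by (simp only: power_add[symmetric], rule arg_cong[where f="\<lambda>x. u^x"], simp add: q)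
    also have "\<dots> = u^(2*Suc q+2)*u*u" by (simp only: power_add power_one_right)
    finally have "u*u*u^(2*Suc q+2) = u^n*u^n" by (simp add: algebra_simps)
    thus ?thesis unfolding cc_closed by (simp add: algebra_simps)
  qed
  have "(1-u^2) * det (mk n (\<lambda>i j. fK m n l u (m+l-1+i) (m+l-1+j))) =
    (1-u^2) * cc u n - 2*u^n*(1-u^2) - u*u*((1-u^2) * cc u (Suc q)) + u^2*((1-u^2) * cc u (n-1))"
    unfolding d by (simp add: algebra_simps power2_eq_square)
  also have "\<dots> = (1-u^2)*(1-u^n)^2 + u^2*(1-u^n*u^n)"
    unfolding c1 c2 c3 by (simp add: algebra_simps power2_eq_square)
  finally show ?thesis .
qed

lemma block2m:
  fixes u :: "'a::comm_ring_1"
  assumes m: "m \<ge> 3" and n: "n \<ge> 3" and l: "l \<ge> 1"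
  shows "(1-u^2) * det (mk (n-1) (\<lambda>i j. fK m n l u (m+l+i) (m+l+j))) = 1 - u^n*u^n"
proof -
  have "mk (n-1) (\<lambda>i j. fK m n l u (m+l+i) (m+l+j)) = mk (n-1) (pathf u)"
    by (rule mk_cong, insert assms, auto simp: fK_def nadj_def pathf_def)
  hence "det (mk (n-1) (\<lambda>i j. fK m n l u (m+l+i) (m+l+j))) = cc u (n-1)" by (simp add: det_path)
  moreover have "(1-u^2) * cc u (n-1) = 1 - u^n*u^n"
  proof -
    have "u^(2*(n-1)+2) = u^(n+n)" by (rule arg_cong[where f="\<lambda>x. u^x"], insert n, simp)
    also have "\<dots> = u^n*u^n" by (simp only: power_add power_one_right)
    finally show ?thesis unfolding cc_closed by simp
  qed
  ultimately show ?thesis by simp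
qed

lemma det_K_bridge:
  fixes u :: "'a::idom"
  assumes m: "m \<ge> 3" and n: "n \<ge> 3" and l: "l \<ge> 1"
  shows "det (mk (m+n+l-1) (fK m n l u)) = det (mk (m-1+l) (fK m n l u)) * det (mk n (\<lambda>i j. fK m n l u (m+l-1+i) (m+l-1+j)))
     - (-u)*(-u) * det (mk (m-1+(l-1)) (fK m n l u)) * det (mk (n-1) (\<lambda>i j. fK m n l u (m+l+i) (m+l+j)))"
proof -
  define a where "a = m+l-2"
  define b where "b = n-1"
  have e: "Suc a + Suc b = m+n+l-1" "Suc a = m-1+l" "Suc b = n" "a = m-1+(l-1)" "b = n-1" "Suc (Suc a) = m+l"
    using assms by (auto simp: a_def b_def)
  have e2: "Suc a = m+l-1" using assms by (auto simp: a_def)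
  have br: "det (mk (Suc a + Suc b) (fK m n l u)) = det (mk (Suc a) (fK m n l u)) * det (mk (Suc b) (\<lambda>i j. fK m n l u (Suc a+i) (Suc a+j)))
     - fK m n l u a (Suc a) * fK m n l u (Suc a) a * det (mk a (fK m n l u)) * det (mk b (\<lambda>i j. fK m n l u (Suc (Suc a)+i) (Suc (Suc a)+j)))"
    by (rule det_mk_bridge, insert assms, auto simp: fK_def nadj_def a_def b_def)
  have v: "fK m n l u a (Suc a) = -u" "fK m n l u (Suc a) a = -u"
    using assms by (auto simp: fK_def nadj_def a_def)
  have q1: "mk (Suc a + Suc b) (fK m n l u) = mk (m+n+l-1) (fK m n l u)" using e(1) by simp
  have q2: "mk (Suc a) (fK m n l u) = mk (m-1+l) (fK m n l u)" using e(2) by simp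
  have q3: "mk (Suc b) (\<lambda>i j. fK m n l u (Suc a+i) (Suc a+j)) = mk n (\<lambda>i j. fK m n l u (m+l-1+i) (m+l-1+j))"
    using e(3) e2 by simp
  have q4: "mk a (fK m n l u) = mk (m-1+(l-1)) (fK m n l u)" using e(4) by simp
  have q5: "mk b (\<lambda>i j. fK m n l u (Suc (Suc a)+i) (Suc (Suc a)+j)) = mk (n-1) (\<lambda>i j. fK m n l u (m+l+i) (m+l+j))"
    using e(5) e(6) by simp
  show ?thesis using br unfolding q1 q2 q3 q4 q5 v .
qed




definition hc_sig :: "nat \<Rightarrow> nat \<Rightarrow> nat \<Rightarrow> nat \<Rightarrow> nat" where
  "hc_sig m n l i = (if i < m-1 then i+1 else if i = m-1 then 0 else if i < m+l-1 then i+n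
      else if i < m+n+l-1 then i-(l-1) else i)"

definition hc_tau :: "nat \<Rightarrow> nat \<Rightarrow> nat \<Rightarrow> nat \<Rightarrow> nat" where
  "hc_tau m n l x = (if x = 0 then m-1 else if x < m then x-1 else if x < m+n then x+l-1
      else if x < m+n+l-1 then x-n else x)"

lemma handcuff_adj_sym: "handcuff_adj m n l x y = handcuff_adj m n l y x"
  unfolding handcuff_adj_def by (simp add: insert_commute)

lemma nadj_sym: "nadj m n l i j = nadj m n l j i"
  unfolding nadj_def by auto

context
  fixes m n l :: nat
  assumes m: "m \<ge> 3" and n: "n \<ge> 3" and l: "l \<ge> 1"
begin

lemma sig_lt: "i < m+n+l-1 \<Longrightarrow> hc_sig m n l i < m+n+l-1"
  using m n l by (auto simp: hc_sig_def)

lemma tau_lt: "x < m+n+l-1 \<Longrightarrow> hc_tau m n l x < m+n+l-1"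
  using m n l by (auto simp: hc_tau_def)

lemma tau_sig: "i < m+n+l-1 \<Longrightarrow> hc_tau m n l (hc_sig m n l i) = i"
  using m n l by (auto simp: hc_sig_def hc_tau_def)

lemma sig_tau: "x < m+n+l-1 \<Longrightarrow> hc_sig m n l (hc_tau m n l x) = x"
  using m n l by (auto simp: hc_sig_def hc_tau_def; arith)

lemma sig_bij: "bij_betw (hc_sig m n l) {0..<m+n+l-1} {0..<m+n+l-1}"
proof (rule bij_betw_byWitness[of _ "hc_tau m n l"])
  show "\<forall>a\<in>{0..<m+n+l-1}. hc_tau m n l (hc_sig m n l a) = a" by (metis atLeastLessThan_iff tau_sig)
  show "\<forall>a\<in>{0..<m+n+l-1}. hc_sig m n l (hc_tau m n l a) = a" by (metis atLeastLessThan_iff sig_tau)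
  show "hc_sig m n l ` {0..<m+n+l-1} \<subseteq> {0..<m+n+l-1}" by (metis atLeastLessThan_iff sig_lt image_subsetI zero_le)
  show "hc_tau m n l ` {0..<m+n+l-1} \<subseteq> {0..<m+n+l-1}" by (metis atLeastLessThan_iff tau_lt image_subsetI zero_le)
qed

lemma sig_permutes: "hc_sig m n l permutes {0..<m+n+l-1}"
  by (rule bij_imp_permutes[OF sig_bij], insert m n l, auto simp: hc_sig_def)

lemma sig_pv: "k \<le> l \<Longrightarrow> hc_sig m n l (m-1+k) = handcuff_path_vertex m n l k"
  using m n l by (auto simp: hc_sig_def handcuff_path_vertex_def) (simp_all add: add.commute add.left_commute)

lemma tau_pv: "k \<le> l \<Longrightarrow> hc_tau m n l (handcuff_path_vertex m n l k) = m-1+k"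
  using tau_sig[of "m-1+k"] sig_pv[of k] m n l by simp

lemma mod_suc: "k < p \<Longrightarrow> Suc k mod p = (if Suc k = p then 0 else Suc k)"
  by (cases "Suc k = p", auto)

lemma fam1: "k < m \<Longrightarrow> nadj m n l (hc_tau m n l k) (hc_tau m n l ((k+1) mod m))"
  using m n l by (auto simp: mod_suc hc_tau_def nadj_def)

lemma fam2: "k < n \<Longrightarrow> nadj m n l (hc_tau m n l (m+k)) (hc_tau m n l (m + (k+1) mod n))"
  using m n l by (auto simp: mod_suc hc_tau_def nadj_def)

lemma fam3: "k < l \<Longrightarrow> nadj m n l (hc_tau m n l (handcuff_path_vertex m n l k)) (hc_tau m n l (handcuff_path_vertex m n l (k+1)))"
  by (simp add: tau_pv nadj_def)

lemma adj_nadj: assumes "handcuff_adj m n l x y" shows "nadj m n l (hc_tau m n l x) (hc_tau m n l y)"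
proof -
  from assms consider (a) k where "k < m" "{x,y} = {k, (k+1) mod m}" | (b) k where "k < n" "{x,y} = {m+k, m+(k+1) mod n}"
    | (c) k where "k < l" "{x,y} = {handcuff_path_vertex m n l k, handcuff_path_vertex m n l (k+1)}"
    unfolding handcuff_adj_def by blast
  thus ?thesis
  proof cases
    case a
    from a(2) have "(x = k \<and> y = (k+1) mod m) \<or> (x = (k+1) mod m \<and> y = k)" by (simp add: doubleton_eq_iff)
    thus ?thesis using fam1[OF a(1)] nadj_sym by metis
  next
    case b
    from b(2) have "(x = m+k \<and> y = m+(k+1) mod n) \<or> (x = m+(k+1) mod n \<and> y = m+k)" by (simp add: doubleton_eq_iff)
    thus ?thesis using fam2[OF b(1)] nadj_sym by metis
  next
    case c
    from c(2) have "(x = handcuff_path_vertex m n l k \<and> y = handcuff_path_vertex m n l (k+1)) \<or> (x = handcuff_path_vertex m n l (k+1) \<and> y = handcuff_path_vertex m n l k)"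
      by (simp add: doubleton_eq_iff)
    thus ?thesis using fam3[OF c(1)] nadj_sym by metis
  qed
qed

lemma cons_adj: "Suc j < m+n+l-1 \<Longrightarrow> handcuff_adj m n l (hc_sig m n l j) (hc_sig m n l (Suc j))"
proof -
  assume j: "Suc j < m+n+l-1"
  consider "j < m-1" | "m-1 \<le> j" "j < m+l-1" | "m+l-1 \<le> j" by linarith
  thus ?thesis
  proof cases
    case 1
    have "hc_sig m n l j = j+1" "hc_sig m n l (Suc j) = (j+1+1) mod m"
      using 1 m by (auto simp: hc_sig_def mod_suc)
    thus ?thesis unfolding handcuff_adj_def using 1 by (intro disjI1 exI[of _ "j+1"], auto)
  next
    case 2
    define k where "k = j - (m-1)"
    have "hc_sig m n l j = handcuff_path_vertex m n l k" "hc_sig m n l (Suc j) = handcuff_path_vertex m n l (k+1)"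
      using sig_pv[of k] sig_pv[of "k+1"] 2 m by (auto simp: k_def)
    moreover have "k < l" using 2 m by (auto simp: k_def)
    ultimately show ?thesis unfolding handcuff_adj_def by (intro disjI2 exI[of _ k], simp)
  next
    case 3
    define k where "k = j - (m+l-1)"
    have "hc_sig m n l j = m+k" "hc_sig m n l (Suc j) = m + (k+1) mod n" "k < n"
      using 3 j m n l by (auto simp: hc_sig_def k_def mod_suc)
    thus ?thesis unfolding handcuff_adj_def by (intro disjI2 disjI1 exI[of _ k], simp)
  qed
qed

lemma adj_sig: assumes i: "i < m+n+l-1" and j: "j < m+n+l-1"
  shows "handcuff_adj m n l (hc_sig m n l i) (hc_sig m n l j) = nadj m n l i j"
proof
  assume "handcuff_adj m n l (hc_sig m n l i) (hc_sig m n l j)"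
  from adj_nadj[OF this] show "nadj m n l i j" using tau_sig i j by simp
next
  assume "nadj m n l i j"
  then consider "i = Suc j" | "j = Suc i" | "i = 0 \<and> j = m-1" | "i = m-1 \<and> j = 0"
     | "i = m+l-1 \<and> j = m+n+l-2" | "i = m+n+l-2 \<and> j = m+l-1" unfolding nadj_def by blast
  thus "handcuff_adj m n l (hc_sig m n l i) (hc_sig m n l j)"
  proof cases
    case 1 thus ?thesis using cons_adj[of j] i handcuff_adj_sym by metis
  next
    case 2 thus ?thesis using cons_adj[of i] j by metis
  next
    case 3
    have "hc_sig m n l j = 0" "hc_sig m n l i = 1" "(0+1) mod m = (1::nat)" using 3 m by (auto simp: hc_sig_def)
    thus ?thesis unfolding handcuff_adj_def using m by (intro disjI1 exI[of _ 0], auto)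
  next
    case 4
    have "hc_sig m n l i = 0" "hc_sig m n l j = 1" "(0+1) mod m = (1::nat)" using 4 m by (auto simp: hc_sig_def)
    thus ?thesis unfolding handcuff_adj_def using m by (intro disjI1 exI[of _ 0], auto)
  next
    case 5
    have "hc_sig m n l i = m" "hc_sig m n l j = m + (n-1)" "(n-1+1) mod n = 0" using 5 m n l by (auto simp: hc_sig_def)
    thus ?thesis unfolding handcuff_adj_def using n by (intro disjI2 disjI1 exI[of _ "n-1"], auto)
  next
    case 6
    have "hc_sig m n l j = m" "hc_sig m n l i = m + (n-1)" "(n-1+1) mod n = 0" using 6 m n l by (auto simp: hc_sig_def)
    thus ?thesis unfolding handcuff_adj_def using n by (intro disjI2 disjI1 exI[of _ "n-1"], auto)
  qed
qed

end




lemma det_reindex: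
  fixes A :: "'a::comm_ring_1 mat"
  assumes A: "A \<in> carrier_mat N N" and p: "p permutes {0..<N}"
  shows "det (mat N N (\<lambda>(i,j). A $$ (p i, p j))) = det A"
proof -
  define B where "B = mat N N (\<lambda>(i,j). A $$ (p i, j))"
  have dB: "det B = signof p * det A" unfolding B_def by (rule det_permute_rows[OF A p])
  have Bc: "B \<in> carrier_mat N N" unfolding B_def by simp
  define C where "C = mat N N (\<lambda>(i,j). transpose_mat B $$ (p i, j))"
  have dC: "det C = signof p * det (transpose_mat B)" unfolding C_def by (rule det_permute_rows, insert Bc p, auto)
  have pl: "\<And>i. i < N \<Longrightarrow> p i < N" using permutes_in_image[OF p] by auto
  have "mat N N (\<lambda>(i,j). A $$ (p i, p j)) = transpose_mat C"
    by (rule eq_matI, auto simp: C_def B_def pl)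
  hence "det (mat N N (\<lambda>(i,j). A $$ (p i, p j))) = det C"
    using det_transpose[of C N] by (simp add: C_def)
  also have "\<dots> = signof p * signof p * det A" unfolding dC det_transpose[OF Bc] dB by simp
  also have "signof p * signof p = (1::'a)" by (simp add: sign_def)
  finally show ?thesis by simp
qed

lemma handshake:
  assumes sym: "\<And>x y. adj x y = adj y x" and irr: "\<And>x. \<not> adj x x"
  shows "2 * card (graph_edges N adj) = (\<Sum>x<N. graph_degree N adj x)"
proof -
  define S where "S = {(x,y). x<N \<and> y<N \<and> adj x y}"
  define E where "E = graph_edges N adj"
  have S1: "S = Sigma {..<N} (\<lambda>x. {y. y<N \<and> adj x y})" unfolding S_def by auto
  have cS: "card S = (\<Sum>x<N. graph_degree N adj x)"
    unfolding S1 graph_degree_def by (subst card_SigmaI, auto)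
  have fE: "finite E" unfolding E_def graph_edges_def
    by (rule finite_subset[of _ "{..<N} \<times> {..<N}"], auto)
  have S2: "S = E \<union> prod.swap ` E"
  proof
    show "S \<subseteq> E \<union> prod.swap ` E"
    proof
      fix p assume "p \<in> S"
      then obtain a b where p: "p = (a,b)" "a<N" "b<N" "adj a b" unfolding S_def by auto
      have ab: "a \<noteq> b" using irr p(4) by auto
      show "p \<in> E \<union> prod.swap ` E"
      proof (cases "a < b")
        case True thus ?thesis using p unfolding E_def graph_edges_def by auto
      next
        case False
        hence "b < a" using ab by auto
        hence "(b,a) \<in> E" using p sym unfolding E_def graph_edges_def by auto
        hence "prod.swap (b,a) \<in> prod.swap ` E" by (rule imageI)
        thus ?thesis using p by simp
      qed
    qed
    show "E \<union> prod.swap ` E \<subseteq> S" unfolding S_def E_def graph_edges_def using sym by auto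
  qed
  have disj: "E \<inter> prod.swap ` E = {}" unfolding E_def graph_edges_def by auto
  have "card S = card E + card (prod.swap ` E)" unfolding S2 by (rule card_Un_disjoint, insert fE disj, auto)
  also have "card (prod.swap ` E) = card E" by (rule card_image, simp)
  finally show ?thesis using cS unfolding E_def by simp
qed

context
  fixes m n l :: nat
  assumes m: "m \<ge> 3" and n: "n \<ge> 3" and l: "l \<ge> 1"
begin

lemma deg_sig: assumes i: "i < m+n+l-1"
  shows "graph_degree (m+n+l-1) (handcuff_adj m n l) (hc_sig m n l i) = card {j. j < m+n+l-1 \<and> nadj m n l i j}"
proof -
  have s1: "{y. y < m+n+l-1 \<and> handcuff_adj m n l (hc_sig m n l i) y} \<subseteq> hc_sig m n l ` {j. j < m+n+l-1 \<and> nadj m n l i j}"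
  proof
    fix y assume "y \<in> {y. y < m+n+l-1 \<and> handcuff_adj m n l (hc_sig m n l i) y}"
    hence y: "y < m+n+l-1" "handcuff_adj m n l (hc_sig m n l i) (hc_sig m n l (hc_tau m n l y))"
      using sig_tau[OF m n l] by auto
    have "nadj m n l i (hc_tau m n l y)" using y adj_sig[OF m n l i tau_lt[OF m n l y(1)]] by simp
    thus "y \<in> hc_sig m n l ` {j. j < m+n+l-1 \<and> nadj m n l i j}"
      using sig_tau[OF m n l y(1)] tau_lt[OF m n l y(1)] by (metis (mono_tags, lifting) image_eqI mem_Collect_eq)
  qed
  have s2: "hc_sig m n l ` {j. j < m+n+l-1 \<and> nadj m n l i j} \<subseteq> {y. y < m+n+l-1 \<and> handcuff_adj m n l (hc_sig m n l i) y}"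
  proof
    fix y assume "y \<in> hc_sig m n l ` {j. j < m+n+l-1 \<and> nadj m n l i j}"
    then obtain j where j: "j < m+n+l-1" "nadj m n l i j" "y = hc_sig m n l j" by auto
    thus "y \<in> {y. y < m+n+l-1 \<and> handcuff_adj m n l (hc_sig m n l i) y}"
      using adj_sig[OF m n l i j(1)] sig_lt[OF m n l j(1)] by auto
  qed
  have "{y. y < m+n+l-1 \<and> handcuff_adj m n l (hc_sig m n l i) y} = hc_sig m n l ` {j. j < m+n+l-1 \<and> nadj m n l i j}"
    using s1 s2 by (rule equalityI)
  moreover have "inj_on (hc_sig m n l) {j. j < m+n+l-1 \<and> nadj m n l i j}"
    by (rule inj_on_subset[OF bij_betw_imp_inj_on[OF sig_bij[OF m n l]]], auto)
  ultimately show ?thesis unfolding graph_degree_def by (simp add: card_image)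
qed

lemma nadj_card: assumes i: "i < m+n+l-1"
  shows "card {j. j < m+n+l-1 \<and> nadj m n l i j} = (if i = m-1 \<or> i = m+l-1 then 3 else 2)"
proof -
  consider "i = 0" | "i = m-1" | "i = m+l-1" | "i = m+n+l-2" | "i \<noteq> 0" "i \<noteq> m-1" "i \<noteq> m+l-1" "i \<noteq> m+n+l-2"
    by blast
  thus ?thesis
  proof cases
    case 1
    have "{j. j < m+n+l-1 \<and> nadj m n l i j} = {1, m-1}" using 1 m n l by (auto simp: nadj_def)
    thus ?thesis using 1 m by simp
  next
    case 2
    have "{j. j < m+n+l-1 \<and> nadj m n l i j} = {m-2, m, 0}" using 2 m n l by (auto simp: nadj_def)
    thus ?thesis using 2 m by simp
  next
    case 3
    have "{j. j < m+n+l-1 \<and> nadj m n l i j} = {m+l-2, m+l, m+n+l-2}" using 3 m n l by (auto simp: nadj_def)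
    moreover have "m+l-2 \<noteq> m+l" "m+l-2 \<noteq> m+n+l-2" "m+l \<noteq> m+n+l-2" using m n l by auto
    ultimately show ?thesis using 3 m n l by simp
  next
    case 4
    have "{j. j < m+n+l-1 \<and> nadj m n l i j} = {m+n+l-3, m+l-1}" using 4 m n l by (auto simp: nadj_def)
    moreover have "m+n+l-3 \<noteq> m+l-1" "m+n+l-2 \<noteq> m-1" "m+n+l-2 \<noteq> m+l-1" using m n l by auto
    ultimately show ?thesis using 4 m n l by simp
  next
    case 5
    have "{j. j < m+n+l-1 \<and> nadj m n l i j} = {i-1, i+1}" using 5 i m n l by (auto simp: nadj_def)
    thus ?thesis using 5 by simp
  qed
qed

lemma card_edges: "card (graph_edges (m+n+l-1) (handcuff_adj m n l)) = m+n+l"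
proof -
  let ?N = "m+n+l-1"
  have irr: "\<not> handcuff_adj m n l x x" for x
  proof
    assume a: "handcuff_adj m n l x x"
    have xN: "x < ?N"
    proof -
      from a consider (a) k where "k < m" "{x,x} = {k, (k+1) mod m}" | (b) k where "k < n" "{x,x} = {m+k, m+(k+1) mod n}"
        | (c) k where "k < l" "{x,x} = {handcuff_path_vertex m n l k, handcuff_path_vertex m n l (k+1)}"
        unfolding handcuff_adj_def by blast
      thus ?thesis
      proof cases
        case a thus ?thesis using m n l by (auto simp: doubleton_eq_iff)
      next
        case b thus ?thesis using m n l by (auto simp: doubleton_eq_iff)
      next
        case c thus ?thesis using m n l by (auto simp: doubleton_eq_iff handcuff_path_vertex_def split: if_splits)
      qed
    qed
    have "nadj m n l (hc_tau m n l x) (hc_tau m n l x)" by (rule adj_nadj[OF m n l a])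
    thus False using m n l by (auto simp: nadj_def)
  qed
  have "2 * card (graph_edges ?N (handcuff_adj m n l)) = (\<Sum>x<?N. graph_degree ?N (handcuff_adj m n l) x)"
    by (rule handshake, rule handcuff_adj_sym, rule irr)
  also have "\<dots> = (\<Sum>i<?N. graph_degree ?N (handcuff_adj m n l) (hc_sig m n l i))"
    using sum.reindex_bij_betw[OF sig_bij[OF m n l], of "graph_degree ?N (handcuff_adj m n l)"]
    by (simp add: atLeast0LessThan)
  also have "\<dots> = (\<Sum>i<?N. (if i = m-1 \<or> i = m+l-1 then 3 else 2))"
    by (rule sum.cong, auto simp: deg_sig nadj_card simp del: One_nat_def)
  also have "\<dots> = (\<Sum>i\<in>{..<?N} \<inter> {i. i = m-1 \<or> i = m+l-1}. 3) + (\<Sum>i\<in>{..<?N} \<inter> - {i. i = m-1 \<or> i = m+l-1}. 2)"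
    by (rule sum.If_cases, simp)
  also have "{..<?N} \<inter> {i. i = m-1 \<or> i = m+l-1} = {m-1, m+l-1}" using m n l by auto
  also have "{..<?N} \<inter> - {i. i = m-1 \<or> i = m+l-1} = {..<?N} - {m-1, m+l-1}" by auto
  also have "card ({..<?N} - {m-1, m+l-1}) = ?N - 2" using m n l by (subst card_Diff_subset, auto)
  hence "(\<Sum>i\<in>{..<?N} - {m-1, m+l-1}. (2::nat)) = 2 * (?N - 2)" by simp
  finally have "2 * card (graph_edges ?N (handcuff_adj m n l)) = 3*2 + 2*(?N-2)" using m l by simp
  thus ?thesis using m n l by linarith
qed

end




context
  fixes m n l :: nat
  assumes m: "m \<ge> 3" and n: "n \<ge> 3" and l: "l \<ge> 1"
begin

lemma deg_val: "i < m+n+l-1 \<Longrightarrow> graph_degree (m+n+l-1) (handcuff_adj m n l) (hc_sig m n l i) = (if i = m-1 \<or> i = m+l-1 then 3 else 2)"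
  using deg_sig[OF m n l] nadj_card[OF m n l] by simp

lemma M_eq:
  fixes u :: "'a::comm_ring_1"
  shows "mat (m+n+l-1) (m+n+l-1) (\<lambda>(i,j). (1\<^sub>m (m+n+l-1) - u \<cdot>\<^sub>m adj_matrix (m+n+l-1) (handcuff_adj m n l)
      + (u^2) \<cdot>\<^sub>m Q_matrix (m+n+l-1) (handcuff_adj m n l)) $$ (hc_sig m n l i, hc_sig m n l j)) = mk (m+n+l-1) (fK m n l u)"
proof (rule eq_matI)
  fix i j assume i: "i < dim_row (mk (m+n+l-1) (fK m n l u))" and j: "j < dim_col (mk (m+n+l-1) (fK m n l u))"
  hence i: "i < m+n+l-1" and j: "j < m+n+l-1" by auto
  have si: "hc_sig m n l i < m+n+l-1" and sj: "hc_sig m n l j < m+n+l-1" using sig_lt[OF m n l] i j by auto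
  have eq: "(hc_sig m n l i = hc_sig m n l j) = (i = j)" using tau_sig[OF m n l] i j by metis
  have ad: "handcuff_adj m n l (hc_sig m n l i) (hc_sig m n l j) = nadj m n l i j" by (rule adj_sig[OF m n l i j])
  have nii: "\<not> nadj m n l i i" using m n l by (auto simp: nadj_def)
  have "(1\<^sub>m (m+n+l-1) - u \<cdot>\<^sub>m adj_matrix (m+n+l-1) (handcuff_adj m n l)
      + (u^2) \<cdot>\<^sub>m Q_matrix (m+n+l-1) (handcuff_adj m n l)) $$ (hc_sig m n l i, hc_sig m n l j) =
     (if i = j then 1 else 0) - u * (if nadj m n l i j then 1 else 0) + u^2 * (if i = j then of_nat (graph_degree (m+n+l-1) (handcuff_adj m n l) (hc_sig m n l i)) - 1 else 0)"
    using si sj by (simp add: adj_matrix_def Q_matrix_def eq ad)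
  also have "\<dots> = fK m n l u i j"
    unfolding fK_def using nii deg_val[OF i] by (auto simp: algebra_simps)
  finally show "mat (m+n+l-1) (m+n+l-1) (\<lambda>(i,j). (1\<^sub>m (m+n+l-1) - u \<cdot>\<^sub>m adj_matrix (m+n+l-1) (handcuff_adj m n l)
      + (u^2) \<cdot>\<^sub>m Q_matrix (m+n+l-1) (handcuff_adj m n l)) $$ (hc_sig m n l i, hc_sig m n l j)) $$ (i,j) = mk (m+n+l-1) (fK m n l u) $$ (i,j)"
    using i j by simp
qed (auto)

lemma pw: "a = b \<Longrightarrow> (u::'a::comm_ring_1)^a = u^b" by simp

theorem gen:
  fixes u :: "'a::idom"
  assumes h: "1 - u^2 \<noteq> 0"
  shows "ihara_zeta_inv (handcuff_nverts m n l) (handcuff_adj m n l) u =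
    - 4 * u^(2*m+2*n+2*l) + u^(2*m+2*n) + 4 * u^(2*m+n+2*l) + 4 * u^(m+2*n+2*l)
    - 2 * u^(2*m+n) - 2 * u^(m+2*n) - 4 * u^(m+n+2*l) + 4 * u^(m+n)
    + u^(2*n) + u^(2*m) - 2 * u^n - 2 * u^m + 1"
proof -
  let ?N = "m+n+l-1"
  let ?adj = "handcuff_adj m n l"
  have N: "handcuff_nverts m n l = ?N" by (simp add: handcuff_nverts_def)
  have cr: "nat (cycle_rank ?N ?adj - 1) = 1"
    unfolding cycle_rank_def card_edges[OF m n l] using m n l by simp
  let ?M = "1\<^sub>m ?N - u \<cdot>\<^sub>m adj_matrix ?N ?adj + (u^2) \<cdot>\<^sub>m Q_matrix ?N ?adj"
  have Mc: "?M \<in> carrier_mat ?N ?N" by (simp add: adj_matrix_def Q_matrix_def)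
  have dM: "det ?M = det (mk ?N (fK m n l u))"
    using det_reindex[OF Mc sig_permutes[OF m n l]] unfolding M_eq[of u] by simp
  have iz: "ihara_zeta_inv (handcuff_nverts m n l) ?adj u = (1-u^2) * det (mk ?N (fK m n l u))"
    unfolding ihara_zeta_inv_def N cr dM by simp
  define A where "A = u^m"
  define B where "B = u^n"
  define L where "L = u^(l-1)"
  have dl: "(1-u^2) * det (mk (m-1+l) (fK m n l u)) = (1-A)^2 + 2*(A*L*L*u*u)*(1-A)"
  proof -
    have "u^(m+2*l) = u^(m+(l-1)+(l-1)+1+1)" by (rule pw, insert l, simp)
    also have "\<dots> = A*L*L*u*u" unfolding A_def L_def by (simp only: power_add power_one_right)
    finally show ?thesis using lolli_closed[OF m n l, of l u] unfolding A_def by simp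
  qed
  have dl1: "(1-u^2) * det (mk (m-1+(l-1)) (fK m n l u)) = (1-A)^2 + 2*(A*L*L)*(1-A)"
  proof -
    have "u^(m+2*(l-1)) = u^(m+(l-1)+(l-1))" by (rule pw, simp)
    also have "\<dots> = A*L*L" unfolding A_def L_def by (simp only: power_add power_one_right)
    finally show ?thesis using lolli_closed[OF m n l, of "l-1" u] unfolding A_def by simp
  qed
  have z: "(1-u^2) * det (mk n (\<lambda>i j. fK m n l u (m+l-1+i) (m+l-1+j))) = (1-u^2)*(1-B)^2 + u^2*(1-B*B)"
    using block2[OF m n l, of u] unfolding B_def .
  have c: "(1-u^2) * det (mk (n-1) (\<lambda>i j. fK m n l u (m+l+i) (m+l+j))) = 1 - B*B"
    using block2m[OF m n l, of u] unfolding B_def .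
  have F: "(1-u^2) * det (mk ?N (fK m n l u)) = -4*(A*A*B*B*L*L*u*u) + A*A*B*B + 4*(A*A*B*L*L*u*u) + 4*(A*B*B*L*L*u*u)
     - 2*(A*A*B) - 2*(A*B*B) - 4*(A*B*L*L*u*u) + 4*(A*B) + B*B + A*A - 2*B - 2*A + 1"
    unfolding det_K_bridge[OF m n l] by (rule fin_alg[OF h dl dl1 z c])
  have p1: "u^(2*m+2*n+2*l) = A*A*B*B*L*L*u*u"
  proof -
    have "u^(2*m+2*n+2*l) = u^(m+m+n+n+(l-1)+(l-1)+1+1)" by (rule pw, insert l, simp)
    thus ?thesis unfolding A_def B_def L_def by (simp only: power_add power_one_right)
  qed
  have p2: "u^(2*m+2*n) = A*A*B*B"
  proof -
    have "u^(2*m+2*n) = u^(m+m+n+n)" by (rule pw, simp)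
    thus ?thesis unfolding A_def B_def by (simp only: power_add power_one_right)
  qed
  have p3: "u^(2*m+n+2*l) = A*A*B*L*L*u*u"
  proof -
    have "u^(2*m+n+2*l) = u^(m+m+n+(l-1)+(l-1)+1+1)" by (rule pw, insert l, simp)
    thus ?thesis unfolding A_def B_def L_def by (simp only: power_add power_one_right)
  qed
  have p4: "u^(m+2*n+2*l) = A*B*B*L*L*u*u"
  proof -
    have "u^(m+2*n+2*l) = u^(m+n+n+(l-1)+(l-1)+1+1)" by (rule pw, insert l, simp)
    thus ?thesis unfolding A_def B_def L_def by (simp only: power_add power_one_right)
  qed
  have p5: "u^(2*m+n) = A*A*B"
  proof -
    have "u^(2*m+n) = u^(m+m+n)" by (rule pw, simp)
    thus ?thesis unfolding A_def B_def by (simp only: power_add power_one_right)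
  qed
  have p6: "u^(m+2*n) = A*B*B"
  proof -
    have "u^(m+2*n) = u^(m+n+n)" by (rule pw, simp)
    thus ?thesis unfolding A_def B_def by (simp only: power_add power_one_right)
  qed
  have p7: "u^(m+n+2*l) = A*B*L*L*u*u"
  proof -
    have "u^(m+n+2*l) = u^(m+n+(l-1)+(l-1)+1+1)" by (rule pw, insert l, simp)
    thus ?thesis unfolding A_def B_def L_def by (simp only: power_add power_one_right)
  qed
  have p8: "u^(m+n) = A*B" unfolding A_def B_def by (simp only: power_add)
  have p9: "u^(2*n) = B*B" unfolding B_def by (simp only: mult_2 power_add)
  have p10: "u^(2*m) = A*A" unfolding A_def by (simp only: mult_2 power_add)
  show ?thesis unfolding iz F p1 p2 p3 p4 p5 p6 p7 p8 p9 p10 A_def[symmetric] B_def[symmetric]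
    by (simp add: algebra_simps)
qed

end

lemma poly_ev_hom: "comm_ring_hom (\<lambda>p. poly p (a::'a::comm_ring_1))"
  by (unfold_locales, auto)

lemma poly_of_nat_ev: "poly (of_nat k) (x::'a::comm_ring_1) = of_nat k"
  by (induct k, auto)

lemma ihara_poly:
  "poly (ihara_zeta_inv N adj [:0,1::complex:]) u = ihara_zeta_inv N adj u"
proof -
  have "map_mat (\<lambda>p. poly p u) (1\<^sub>m N - [:0,1::complex:] \<cdot>\<^sub>m adj_matrix N adj + ([:0,1:]^2) \<cdot>\<^sub>m Q_matrix N adj)
     = 1\<^sub>m N - u \<cdot>\<^sub>m adj_matrix N adj + (u^2) \<cdot>\<^sub>m Q_matrix N adj"
    by (rule eq_matI, auto simp: adj_matrix_def Q_matrix_def poly_of_nat_ev)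
  hence "poly (det (1\<^sub>m N - [:0,1::complex:] \<cdot>\<^sub>m adj_matrix N adj + ([:0,1:]^2) \<cdot>\<^sub>m Q_matrix N adj)) u
       = det (1\<^sub>m N - u \<cdot>\<^sub>m adj_matrix N adj + (u^2) \<cdot>\<^sub>m Q_matrix N adj)"
    by (metis comm_ring_hom.hom_det[OF poly_ev_hom])
  thus ?thesis unfolding ihara_zeta_inv_def by simp
qed

theorem mainTheorem7:
  fixes m n l :: nat and u :: complex
  assumes "m > 2" and "n > 2" and "l > 0"
  shows "ihara_zeta_inv (handcuff_nverts m n l) (handcuff_adj m n l) u =
    - 4 * u^(2*m+2*n+2*l) + u^(2*m+2*n) + 4 * u^(2*m+n+2*l) + 4 * u^(m+2*n+2*l)
    - 2 * u^(2*m+n) - 2 * u^(m+2*n) - 4 * u^(m+n+2*l) + 4 * u^(m+n)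
    + u^(2*n) + u^(2*m) - 2 * u^n - 2 * u^m + 1"
proof -
  let ?X = "[:0,1::complex:]"
  have m: "m \<ge> 3" and n: "n \<ge> 3" and l: "l \<ge> 1" using assms by auto
  have h: "1 - ?X^2 \<noteq> 0"
  proof
    assume "1 - ?X^2 = 0"
    hence "poly (1 - ?X^2) 0 = 0" by simp
    thus False by simp
  qed
  have "poly (ihara_zeta_inv (handcuff_nverts m n l) (handcuff_adj m n l) ?X) u =
    poly (- 4 * ?X^(2*m+2*n+2*l) + ?X^(2*m+2*n) + 4 * ?X^(2*m+n+2*l) + 4 * ?X^(m+2*n+2*l)
    - 2 * ?X^(2*m+n) - 2 * ?X^(m+2*n) - 4 * ?X^(m+n+2*l) + 4 * ?X^(m+n)
    + ?X^(2*n) + ?X^(2*m) - 2 * ?X^n - 2 * ?X^m + 1) u"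
    unfolding gen[OF m n l h] ..
  thus ?thesis unfolding ihara_poly by simp
qed


end
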